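(* Let $m\ge 1$ and $l\ge 0$ be integers and put $k=2^m l+2^{m-1}$. Then $$c(k)=c(2^m l)\,F(m-1),$$ where $F(m-1)=2^{2^{m-1}}+1$.
   Context: For $n\ge 0$, $c(n)=\sum_{i=0}^{n}\left(\binom{n}{i}\bmod 2\right)2^{i}$, the integer whose binary digits form the $n$-th row of Pascal's triangle modulo $2$. $F(j)=2^{2^j}+1$ is the $j$-th Fermat number. *)

theory Defs
  imports Main
begin

definition c :: "nat \<Rightarrow> nat" where
  "c n = (\<Sum>i=0..n. ((n choose i) mod 2) * 2 ^ i)"

definition F :: "nat \<Rightarrow> nat" where
  "F j = 2 ^ (2 ^ j) + 1"

end

theory Submission
  imports Defs
begin

lemma mod_help: "(x::nat) mod 2 = p mod 2 \<Longrightarrow> z mod 2 = q mod 2 \<Longrightarrow> (x + 2*y + z) mod 2 = (p + q) mod 2"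
  by (metis mod_add_cong mod_mult_self1 add.commute add.assoc mult.commute)

lemma L_even: "(2*n choose 2*k) mod 2 = (n choose k) mod 2 \<and> (2*n choose Suc(2*k)) mod 2 = 0"
proof (induction n arbitrary: k)
  case 0
  then show ?case by (cases k) auto
next
  case (Suc n)
  have e: "2 * Suc n = Suc (Suc (2*n))" by simp
  show ?case
  proof (cases k)
    case 0
    then show ?thesis by (simp add: e)
  next
    case (Suc k')
    have a: "(2 * Suc n choose 2 * k) = (2*n choose 2*k') + 2*(2*n choose Suc (2*k')) + (2*n choose 2*Suc k')"
      using Suc by (simp add: e binomial_Suc_Suc)
    have b: "(2 * Suc n choose Suc (2 * k)) = (2*n choose Suc(2*k')) + 2*(2*n choose 2*Suc k') + (2*n choose Suc (2*Suc k'))"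
      using Suc by (simp add: e binomial_Suc_Suc)
    have c1: "(Suc n choose k) = (n choose k') + (n choose Suc k')" using Suc by simp
    have "(2 * Suc n choose 2 * k) mod 2 = (Suc n choose k) mod 2"
      unfolding a c1 by (rule mod_help) (use Suc.IH[of k'] Suc.IH[of "Suc k'"] in auto)
    moreover have "(2 * Suc n choose Suc (2 * k)) mod 2 = (0+0) mod 2"
      unfolding b by (rule mod_help) (use Suc.IH[of k'] Suc.IH[of "Suc k'"] in auto)
    ultimately show ?thesis by simp
  qed
qed

lemma L_odd: "(Suc (2*n) choose 2*k) mod 2 = (n choose k) mod 2 \<and> (Suc (2*n) choose Suc(2*k)) mod 2 = (n choose k) mod 2"
proof
  show "(Suc (2*n) choose Suc(2*k)) mod 2 = (n choose k) mod 2"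
    using mod_help[of "2*n choose 2*k" "n choose k" "2*n choose Suc(2*k)" 0 0] L_even[of n k]
    by (simp add: binomial_Suc_Suc)
  show "(Suc (2*n) choose 2*k) mod 2 = (n choose k) mod 2"
  proof (cases k)
    case 0 then show ?thesis by simp
  next
    case (Suc k')
    then have "(Suc (2*n) choose 2*k) = (2*n choose Suc (2*k')) + 2*0 + (2*n choose 2*k)"
      by (simp add: binomial_Suc_Suc)
    then show ?thesis
      using mod_help[of "2*n choose Suc(2*k')" 0 "2*n choose 2*k" "n choose k" 0] L_even[of n k'] L_even[of n k]
      by simp
  qed
qed

definition b :: "nat \<Rightarrow> nat \<Rightarrow> nat" where "b n i = (n choose i) mod 2"
definition cb :: "nat \<Rightarrow> nat \<Rightarrow> nat" where "cb x n = (\<Sum>i<Suc n. b n i * x ^ i)"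

lemma cb_any: "n < N \<Longrightarrow> (\<Sum>i<N. b n i * x ^ i) = cb x n"
  unfolding cb_def
  by (rule sum.mono_neutral_right) (auto simp: b_def binomial_eq_0)

lemma sum_split2: "(\<Sum>i<2*M. f i) = (\<Sum>k<M. f (2*k)) + (\<Sum>k<M. f (Suc (2*k)))" for f :: "nat \<Rightarrow> nat"
  by (induction M) auto

lemma cb_even: "cb x (2*n) = cb (x^2) n"
proof -
  have "cb x (2*n) = (\<Sum>i<2*Suc n. b (2*n) i * x ^ i)" by (rule cb_any[symmetric]) simp
  also have "\<dots> = (\<Sum>k<Suc n. b n k * (x^2) ^ k)"
    unfolding sum_split2 using L_even[of n] by (simp add: b_def power_mult)
  also have "\<dots> = cb (x^2) n" by (simp add: cb_def)
  finally show ?thesis .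
qed

lemma cb_odd: "cb x (Suc (2*n)) = cb (x^2) n * (1 + x)"
proof -
  have "cb x (Suc (2*n)) = (\<Sum>i<2*Suc n. b (Suc (2*n)) i * x ^ i)" by (rule cb_any[symmetric]) simp
  also have "\<dots> = (\<Sum>k<Suc n. b n k * (x^2) ^ k) + (\<Sum>k<Suc n. b n k * (x^2) ^ k) * x"
    unfolding sum_split2 sum_distrib_right
  proof (intro arg_cong2[where f="(+)"] sum.cong refl)
    fix k assume "k \<in> {..<Suc n}"
    show "b (Suc (2 * n)) (2 * k) * x ^ (2 * k) = b n k * (x\<^sup>2) ^ k"
      using L_odd[of n k] by (simp add: b_def power_mult)
    show "b (Suc (2 * n)) (Suc (2 * k)) * x ^ Suc (2 * k) = b n k * (x\<^sup>2) ^ k * x"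
      using L_odd[of n k] by (simp add: b_def power_mult)
  qed
  also have "\<dots> = cb (x^2) n * (1 + x)" by (simp add: cb_def algebra_simps)
  finally show ?thesis .
qed

lemma cb_0: "cb x 0 = 1" by (simp add: cb_def b_def)

lemma cb_mult: "B < 2^j \<Longrightarrow> cb x (2^j * a + B) = cb x (2^j * a) * cb x B"
proof (induction j arbitrary: x B)
  case 0
  then show ?case by (simp add: cb_0)
next
  case (Suc j)
  obtain B' r where B: "B = 2*B' + r" and r: "r < 2" by (metis mod_less_divisor mult_div_mod_eq zero_less_numeral)
  have B': "B' < 2^j" using Suc.prems B r by simp
  have e1: "2^Suc j * a + B = 2*(2^j*a + B') + r" using B by simp
  have e2: "2^Suc j * a = 2*(2^j*a)" by simp
  show ?case
  proof (cases "r = 0")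
    case True
    have "cb x (2^Suc j * a + B) = cb (x^2) (2^j*a + B')" using e1 True cb_even[of x "2^j*a + B'"] by (simp add: mult.assoc)
    moreover have "cb x B = cb (x^2) B'" using B True cb_even by simp
    ultimately show ?thesis unfolding e2 using Suc.IH[OF B'] by (simp add: cb_even)
  next
    case False
    then have "r = 1" using r by simp
    have "cb x (2^Suc j * a + B) = cb (x^2) (2^j*a + B') * (1+x)" using e1 \<open>r=1\<close> cb_odd[of x "2^j*a + B'"] by (simp add: mult.assoc)
    moreover have "cb x B = cb (x^2) B' * (1+x)" using B \<open>r=1\<close> cb_odd by simp
    moreover have "cb x (2^Suc j * a) = cb (x^2) (2^j*a)" unfolding e2 by (rule cb_even)
    ultimately show ?thesis using Suc.IH[OF B', of "x^2"] by (simp add: algebra_simps)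
  qed
qed

lemma cb_pow: "cb x (2^j) = 1 + x^(2^j)"
proof (induction j arbitrary: x)
  case 0
  then show ?case by (simp add: cb_def b_def)
next
  case (Suc j)
  have "cb x (2^Suc j) = cb (x^2) (2^j)" using cb_even[of x "2^j"] by simp
  then show ?case using Suc.IH by (simp add: power_mult[symmetric] mult.commute)
qed


lemma c_cb: "c n = cb 2 n"
  unfolding c_def cb_def b_def by (simp add: atLeast0AtMost lessThan_Suc_atMost)

theorem corollary4:
  fixes m l k :: nat
  assumes "m \<ge> 1"
    and "k = 2 ^ m * l + 2 ^ (m - 1)"
  shows "c k = c (2 ^ m * l) * F (m - 1)"
proof -
  have lt: "(2::nat) ^ (m - 1) < 2 ^ m" using assms(1) by simp
  show ?thesis
    unfolding assms(2) c_cb cb_mult[OF lt] cb_pow F_def by simp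
qed

end
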